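(* The size $z_{SS}$ of the non-self-referencing LZSS factorization satisfies: substitutions: $\limsup_{n\to\infty}\mathsf{MS}_{\mathrm{sub}}(z_{SS},n)\le 3$ and $\mathsf{AS}_{\mathrm{sub}}(z_{SS},n)\le 2z_{SS}-2$; insertions: $\mathsf{MS}_{\mathrm{ins}}(z_{SS},n)\le 2$ and $\mathsf{AS}_{\mathrm{ins}}(z_{SS},n)\le z_{SS}$; deletions: $\limsup_{n\to\infty}\mathsf{MS}_{\mathrm{del}}(z_{SS},n)\le 3$ and $\mathsf{AS}_{\mathrm{del}}(z_{SS},n)\le 2z_{SS}-3$, where $\mathsf{AS}_\ast(z_{SS},n)\le a z_{SS}-c$ means $z_{SS}(T')-z_{SS}(T)\le a\,z_{SS}(T)-c$ for all $T$ of length $n$ and all $T'$ obtained from $T$ by one edit of that type.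
   Context: Strings are over an alphabet $\Sigma$; $\mathsf{ed}$ is the edit distance. $\mathsf{MS}_{\mathrm{sub}}(C,n)=\max_{T\in\Sigma^n}\{C(T')/C(T): T'\in\Sigma^n,\ \mathsf{ed}(T,T')=1\}$, with $\mathsf{MS}_{\mathrm{ins}},\mathsf{MS}_{\mathrm{del}}$ analogous for $T'$ of length $n+1$, resp. $n-1$, and $\mathsf{AS}_\ast$ analogous with $C(T')-C(T)$. The non-self-referencing LZSS factorization of $T$ is $T=f_1\cdots f_z$ where each $f_i$ is either the first occurrence in $T$ of a character, or the longest prefix of $f_i\cdots f_z$ that occurs as a substring of $f_1\cdots f_{i-1}$; $z_{SS}(T)=z$. *)

theory Defs
  imports Complex_Main "HOL-Library.Sublist" "HOL-Library.Extended_Real" "HOL-Library.Liminf_Limsup"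
begin

fun ed :: "'a list \<Rightarrow> 'a list \<Rightarrow> nat" where
  "ed [] ys = length ys"
| "ed xs [] = length xs"
| "ed (x # xs) (y # ys) =
     min (min (ed xs (y # ys) + 1) (ed (x # xs) ys + 1))
         (ed xs ys + (if x = y then 0 else 1))"

definition is_lzss_fact :: "'a list \<Rightarrow> 'a list list \<Rightarrow> bool" where
  "is_lzss_fact T fs \<longleftrightarrow> concat fs = T \<and>
     (\<forall>i < length fs.
        let P = concat (take i fs); S = concat (drop i fs); f = fs ! i in
        (length f = 1 \<and> hd f \<notin> set P) \<or>
        (f \<noteq> [] \<and> prefix f S \<and> sublist f P \<and>
         (\<forall>g. prefix g S \<and> sublist g P \<longrightarrow> length g \<le> length f)))"

definition z_SS :: "'a list \<Rightarrow> nat" where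
  "z_SS T = (THE k. \<exists>fs. is_lzss_fact T fs \<and> length fs = k)"

definition MS_sub :: "('a list \<Rightarrow> nat) \<Rightarrow> nat \<Rightarrow> ereal" where
  "MS_sub C n = Sup {ereal (real (C T') / real (C T)) | T T'.
      length T = n \<and> length T' = n \<and> ed T T' = 1}"

definition MS_ins :: "('a list \<Rightarrow> nat) \<Rightarrow> nat \<Rightarrow> ereal" where
  "MS_ins C n = Sup {ereal (real (C T') / real (C T)) | T T'.
      length T = n \<and> length T' = n + 1 \<and> ed T T' = 1}"

definition MS_del :: "('a list \<Rightarrow> nat) \<Rightarrow> nat \<Rightarrow> ereal" where
  "MS_del C n = Sup {ereal (real (C T') / real (C T)) | T T'.
      length T = n \<and> length T' + 1 = n \<and> ed T T' = 1}"

end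

theory Submission
  imports Defs
begin

definition vp :: "'a list list \<Rightarrow> bool" where
  "vp ps \<longleftrightarrow> (\<forall>i<length ps. length (ps!i) \<le> 1 \<or> sublist (ps!i) (concat (take i ps)))"

lemma sub_trans: "sublist a b \<Longrightarrow> sublist b c \<Longrightarrow> sublist a c"
  using sublist_order.order.trans by blast

lemma subL: "sublist w W \<Longrightarrow> sublist w (x @ W)"
  by (metis sub_trans sublist_append_leftI)
lemma subR: "sublist w W \<Longrightarrow> sublist w (W @ x)"
  by (metis sub_trans sublist_append_rightI)
lemma subM: "sublist w W \<Longrightarrow> sublist w (x @ W @ y)"
  by (metis sub_trans sublist_appendI)
lemma sufsub: "suffix w W \<Longrightarrow> sublist w (W @ x)" by (meson subR suffix_imp_sublist)
lemma presub: "prefix w W \<Longrightarrow> sublist w (x @ W)" by (meson subL prefix_imp_sublist)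
lemma presub2: "prefix w W \<Longrightarrow> sublist w (x @ y @ W)" by (metis presub append_assoc)

lemma vp_block:
  assumes "vp xs" "\<forall>q\<in>set ys. length q \<le> 1 \<or> sublist q (concat xs)"
  shows "vp (xs @ ys)"
  unfolding vp_def
proof (intro allI impI)
  fix i assume i: "i < length (xs @ ys)"
  show "length ((xs @ ys) ! i) \<le> 1 \<or> sublist ((xs @ ys) ! i) (concat (take i (xs @ ys)))"
  proof (cases "i < length xs")
    case True
    have "length (xs ! i) \<le> 1 \<or> sublist (xs ! i) (concat (take i xs))"
      using assms(1)[unfolded vp_def, rule_format, OF True] .
    moreover have e1: "(xs @ ys) ! i = xs ! i" using True by (simp add: nth_append)
    moreover have e2: "take i (xs @ ys) = take i xs" using True by simp
    ultimately show ?thesis unfolding e1 e2 by blast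
  next
    case False
    define q where "q = ys ! (i - length xs)"
    have qi: "(xs @ ys) ! i = q" using False unfolding q_def by (simp add: nth_append)
    have "i - length xs < length ys" using i False by simp
    then have "q \<in> set ys" unfolding q_def by simp
    then have qq: "length q \<le> 1 \<or> sublist q (concat xs)" using assms(2) by blast
    have "take i (xs @ ys) = xs @ take (i - length xs) ys" using False by simp
    then have s: "sublist (concat xs) (concat (take i (xs @ ys)))" by (simp add: subR)
    show ?thesis unfolding qi using qq sub_trans[OF _ s] by blast
  qed
qed

lemma vp_prefix: assumes "vp (xs @ ys)" shows "vp xs"
  unfolding vp_def
proof (intro allI impI)
  fix i assume i: "i < length xs"
  then have "i < length (xs @ ys)" by simp
  then have "length ((xs@ys) ! i) \<le> 1 \<or> sublist ((xs@ys) ! i) (concat (take i (xs@ys)))"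
    using assms unfolding vp_def by blast
  moreover have e1: "(xs @ ys) ! i = xs ! i" using i by (simp add: nth_append)
  moreover have e2: "take i (xs @ ys) = take i xs" using i by simp
  ultimately show "length (xs ! i) \<le> 1 \<or> sublist (xs ! i) (concat (take i xs))" unfolding e1 e2 by blast
qed

lemma ex1: "P w \<Longrightarrow> \<exists>qs. concat qs = w \<and> length qs \<le> 2 + k \<and> (\<forall>q\<in>set qs. P q)"
  by (rule exI[of _ "[w]"]) simp
lemma ex2: "P a \<Longrightarrow> P b \<Longrightarrow> \<exists>qs. concat qs = a @ b \<and> length qs \<le> 2 + k \<and> (\<forall>q\<in>set qs. P q)"
  by (rule exI[of _ "[a, b]"]) simp
lemma ex3: "P a \<Longrightarrow> P [c] \<Longrightarrow> P b \<Longrightarrow> \<exists>qs. concat qs = a @ c # b \<and> length qs \<le> 2 + length [c] \<and> (\<forall>q\<in>set qs. P q)"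
  by (rule exI[of _ "[a, [c], b]"]) simp

lemma cover:
  assumes "sublist w (u @ mid @ W)" "length mid \<le> 1"
  shows "\<exists>qs. concat qs = w \<and> length qs \<le> 2 + length mid \<and>
     (\<forall>q\<in>set qs. length q \<le> 1 \<or> sublist q (u @ mid' @ W))"
proof (cases mid)
  case Nil
  then have "sublist w u \<or> sublist w W \<or> (\<exists>a b. w = a @ b \<and> suffix a u \<and> prefix b W)"
    using assms(1) sublist_append by auto
  then show ?thesis
  proof (elim disjE exE conjE)
    assume "sublist w u" then show ?thesis by (intro ex1) (simp add: subR)
  next
    assume "sublist w W" then show ?thesis by (intro ex1) (simp add: subL)
  next
    fix a b assume h: "w = a @ b" "suffix a u" "prefix b W"
    have "sublist a (u @ mid' @ W)" "sublist b (u @ mid' @ W)"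
      using sufsub[OF h(2)] presub2[OF h(3)] by auto
    then show ?thesis unfolding h(1) by (intro ex2) auto
  qed
next
  case (Cons c r)
  then have mid: "mid = [c]" using assms(2) by auto
  have "sublist w u \<or> sublist w (c # W) \<or> (\<exists>a b. w = a @ b \<and> suffix a u \<and> prefix b (c # W))"
    using assms(1) sublist_append[of w u "c # W"] mid by auto
  then show ?thesis
  proof (elim disjE exE conjE)
    assume "sublist w u" then show ?thesis by (intro ex1) (simp add: subR)
  next
    assume "sublist w (c # W)"
    then have "sublist w [c] \<or> sublist w W \<or> (\<exists>a b. w = a @ b \<and> suffix a [c] \<and> prefix b W)"
      using sublist_append[of w "[c]" W] by auto
    then show ?thesis
    proof (elim disjE exE conjE)
      assume "sublist w [c]" then have "length w \<le> 1" using sublist_length_le by fastforce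
      then show ?thesis by (intro ex1) simp
    next
      assume "sublist w W" then show ?thesis by (intro ex1) (simp add: subL)
    next
      fix a b assume ab: "w = a @ b" "suffix a [c]" "prefix b W"
      have "length a \<le> 1" using ab(2) suffix_length_le by fastforce
      moreover have "sublist b (u @ mid' @ W)" using presub2[OF ab(3)] by auto
      ultimately show ?thesis unfolding ab(1) by (intro ex2) auto
    qed
  next
    fix a b assume ab: "w = a @ b" "suffix a u" "prefix b (c # W)"
    have sa: "sublist a (u @ mid' @ W)" using sufsub[OF ab(2)] by auto
    show ?thesis
    proof (cases b)
      case Nil
      then show ?thesis using sa unfolding ab(1) by (intro ex1) simp
    next
      case (Cons c' b')
      then have cc: "c' = c" "prefix b' W" using ab by auto
      have sb: "sublist b' (u @ mid' @ W)" using presub2[OF cc(2)] by auto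
      have wq: "w = a @ c # b'" using ab(1) Cons cc(1) by simp
      show ?thesis unfolding wq mid using sa sb by (intro ex3) auto
    qed
  qed
qed

lemma split_at:
  "p < length (concat fs) \<Longrightarrow> \<exists>gs f hs x y. fs = gs @ f # hs \<and> f = x @ y \<and> y \<noteq> [] \<and>
      concat gs @ x = take p (concat fs)"
proof (induction fs arbitrary: p)
  case Nil then show ?case by simp
next
  case (Cons f fs)
  show ?case
  proof (cases "p < length f")
    case True
    have e1: "f # fs = [] @ f # fs" by simp
    have e2: "f = take p f @ drop p f" by simp
    have e3: "drop p f \<noteq> []" using True by simp
    have e4: "concat [] @ take p f = take p (concat (f # fs))" using True by simp
    show ?thesis using e1 e2 e3 e4 by blast
  next
    case False
    then have "p - length f < length (concat fs)" using Cons.prems by auto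
    from Cons.IH[OF this] obtain gs g hs x y where
      h: "fs = gs @ g # hs" "g = x @ y" "y \<noteq> []" "concat gs @ x = take (p - length f) (concat fs)"
      by blast
    have e1: "f # fs = (f # gs) @ g # hs" using h(1) by simp
    have e2: "concat (f # gs) @ x = take p (concat (f # fs))"
      using h(4) False by (simp add: take_append)
    show ?thesis using e1 e2 h(2,3) by blast
  qed
qed

lemma suffix_part:
  assumes "vp ps0" "concat ps0 = u @ mid' @ w0" "length mid \<le> 1"
    "\<forall>i<length hs. length (hs!i) \<le> 1 \<or> sublist (hs!i) (u @ mid @ w0 @ concat (take i hs))"
  shows "\<exists>ps. vp ps \<and> concat ps = u @ mid' @ w0 @ concat hs \<and>
           length ps \<le> length ps0 + (2 + length mid) * length hs"
  using assms
proof (induction hs arbitrary: ps0 w0)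
  case Nil
  then show ?case by (intro exI[of _ ps0]) auto
next
  case (Cons h hs)
  have h0: "length h \<le> 1 \<or> sublist h (u @ mid @ w0)" using Cons.prems(4) by force
  have "\<exists>qs. concat qs = h \<and> length qs \<le> 2 + length mid \<and>
     (\<forall>q\<in>set qs. length q \<le> 1 \<or> sublist q (u @ mid' @ w0))"
  proof (cases "length h \<le> 1")
    case True then show ?thesis by (intro exI[of _ "[h]"]) auto
  next
    case False then show ?thesis using h0 cover[OF _ Cons.prems(3)] by blast
  qed
  then obtain qs where qs: "concat qs = h" "length qs \<le> 2 + length mid"
     "\<forall>q\<in>set qs. length q \<le> 1 \<or> sublist q (u @ mid' @ w0)" by blast
  have vp1: "vp (ps0 @ qs)" using vp_block[OF Cons.prems(1)] qs(3) Cons.prems(2) by simp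
  have c1: "concat (ps0 @ qs) = u @ mid' @ (w0 @ h)" using Cons.prems(2) qs(1) by simp
  have "\<forall>i<length hs. length (hs!i) \<le> 1 \<or> sublist (hs!i) (u @ mid @ (w0 @ h) @ concat (take i hs))"
  proof (intro allI impI)
    fix i assume "i < length hs"
    then show "length (hs!i) \<le> 1 \<or> sublist (hs!i) (u @ mid @ (w0 @ h) @ concat (take i hs))"
      using Cons.prems(4)[rule_format, of "Suc i"] by simp
  qed
  from Cons.IH[OF vp1 c1 Cons.prems(3) this] obtain ps where
    "vp ps" "concat ps = u @ mid' @ (w0 @ h) @ concat hs"
    "length ps \<le> length (ps0 @ qs) + (2 + length mid) * length hs" by blast
  then show ?case using qs(2) by (intro exI[of _ ps]) auto
qed

lemma filter_ne_len: "length (filter (\<lambda>q. q \<noteq> []) qs) \<le> sum_list (map length qs)"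
proof (induction qs)
  case (Cons a qs) then show ?case by (cases a) auto
qed simp

lemma main_edit:
  assumes vp: "vp fs" and ne: "\<forall>f\<in>set fs. f \<noteq> []" and T: "concat fs = u @ mid @ v"
    and m: "length mid \<le> 1" and nv: "mid \<noteq> [] \<or> v \<noteq> []" and m': "length mid' \<le> 1"
  shows "\<exists>ps. vp ps \<and> concat ps = u @ mid' @ v \<and>
     length ps \<le> length mid' + (2 + length mid) * (length fs - 1) + (1 - length mid)"
proof -
  have "length u < length (concat fs)" using T nv by auto
  from split_at[OF this] obtain gs f hs x y where
    d: "fs = gs @ f # hs" "f = x @ y" "y \<noteq> []" "concat gs @ x = take (length u) (concat fs)"
    by blast
  have u: "u = concat gs @ x" using d(4) T by simp
  have yv: "y @ concat hs = mid @ v" using T d(1,2) u by simp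
  obtain y' where y': "y = mid @ y'" "v = y' @ concat hs"
  proof (cases mid)
    case Nil then show ?thesis using that yv by auto
  next
    case (Cons c r)
    then have "r = []" using m by auto
    then show ?thesis using that yv d(3) Cons by (cases y) auto
  qed
  have f_ok: "length f \<le> 1 \<or> sublist f (concat gs)"
  proof -
    have "length gs < length fs" using d(1) by simp
    then have "length (fs ! length gs) \<le> 1 \<or> sublist (fs ! length gs) (concat (take (length gs) fs))"
      using vp unfolding vp_def by blast
    then show ?thesis using d(1) by simp
  qed
  define B where "B = filter (\<lambda>q. q \<noteq> []) [x, mid', y']"
  have vpg: "vp gs" using vp_prefix vp d(1) by blast
  have Bok: "\<forall>q\<in>set B. length q \<le> 1 \<or> sublist q (concat gs)"
  proof
    fix q assume q: "q \<in> set B"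
    have fx: "f = x @ mid @ y'" using d(2) y' by simp
    show "length q \<le> 1 \<or> sublist q (concat gs)"
    proof (cases "length f \<le> 1")
      case True
      have "q = x \<or> q = mid' \<or> q = y'" using q unfolding B_def by (auto split: if_splits)
      then show ?thesis using True m' fx by auto
    next
      case False
      then have sf: "sublist f (concat gs)" using f_ok by auto
      have "sublist x f" "sublist y' f" using fx by (simp, metis append_assoc sublist_append_leftI)
      moreover have "q = x \<or> q = mid' \<or> q = y'" using q unfolding B_def by (auto split: if_splits)
      ultimately show ?thesis using m' sf sub_trans by metis
    qed
  qed
  have vp0: "vp (gs @ B)" using vp_block[OF vpg Bok] .
  have c0: "concat (gs @ B) = u @ mid' @ y'" unfolding B_def u by simp
  have hsok: "\<forall>i<length hs. length (hs!i) \<le> 1 \<or> sublist (hs!i) (u @ mid @ y' @ concat (take i hs))"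
  proof (intro allI impI)
    fix i assume i: "i < length hs"
    have "length (fs ! (length gs + Suc i)) \<le> 1 \<or> sublist (fs ! (length gs + Suc i)) (concat (take (length gs + Suc i) fs))"
      using vp[unfolded vp_def, rule_format, of "length gs + Suc i"] i d(1) by simp
    then show "length (hs!i) \<le> 1 \<or> sublist (hs!i) (u @ mid @ y' @ concat (take i hs))"
      using d(1) d(2) y'(1) u by (simp add: nth_append)
  qed
  from suffix_part[OF vp0 c0 m hsok] obtain ps where
    ps: "vp ps" "concat ps = u @ mid' @ y' @ concat hs"
      "length ps \<le> length (gs @ B) + (2 + length mid) * length hs" by blast
  have lB: "length B \<le> 2 + length mid'" unfolding B_def using m' by (cases mid') auto
  have lB0: "gs = [] \<Longrightarrow> length B \<le> length mid' + (1 - length mid)"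
  proof -
    assume "gs = []"
    then have "length f \<le> 1" using f_ok d ne by auto
    then have "length x + length mid + length y' \<le> 1" using d(2) y'(1) by simp
    moreover have "length B \<le> length x + length mid' + length y'"
      unfolding B_def using filter_ne_len[of "[x, mid', y']"] by simp
    ultimately show ?thesis by linarith
  qed
  have cnt: "length ps \<le> length mid' + (2 + length mid) * (length fs - 1) + (1 - length mid)"
  proof (cases "gs = []")
    case True
    then have "length fs - 1 = length hs" using d(1) by simp
    then show ?thesis using ps(3) lB0 True by simp
  next
    case False
    then have g1: "length gs \<ge> 1" by (cases gs) auto
    have L: "length fs - 1 = length gs + length hs" using d(1) by simp
    have "length mid = 0 \<or> length mid = 1" using m by arith
    then show ?thesis
    proof
      assume m0: "length mid = 0"
      have "length ps \<le> length gs + (2 + length mid') + 2 * length hs" using ps(3) lB m0 by simp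
      also have "\<dots> \<le> length mid' + 2 * (length gs + length hs) + 1" using g1 by simp
      finally show ?thesis using L m0 by simp
    next
      assume m1: "length mid = 1"
      have "length ps \<le> length gs + (2 + length mid') + 3 * length hs" using ps(3) lB m1 by simp
      also have "\<dots> \<le> length mid' + 3 * (length gs + length hs)" using g1 by simp
      finally show ?thesis using L m1 by simp
    qed
  qed
  show ?thesis using ps(1,2) y'(2) cnt by auto
qed

definition lzc :: "'a list \<Rightarrow> 'a list \<Rightarrow> 'a list \<Rightarrow> bool" where
  "lzc P S f \<longleftrightarrow> (length f = 1 \<and> hd f \<notin> set P) \<or>
        (f \<noteq> [] \<and> prefix f S \<and> sublist f P \<and>
         (\<forall>g. prefix g S \<and> sublist g P \<longrightarrow> length g \<le> length f))"

lemma is_lzss_alt: "is_lzss_fact T fs \<longleftrightarrow> concat fs = T \<and>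
   (\<forall>i<length fs. lzc (concat (take i fs)) (concat (drop i fs)) (fs!i))"
  unfolding is_lzss_fact_def lzc_def Let_def by simp

lemma sublist_single: "c \<in> set P \<Longrightarrow> sublist [c] P"
  by (metis in_set_conv_decomp sublist_appendI append_Cons append_Nil)

lemma lz_ex: "\<exists>fs. concat fs = S \<and> (\<forall>i<length fs. lzc (P @ concat (take i fs)) (concat (drop i fs)) (fs!i))"
proof (induction "length S" arbitrary: S P rule: less_induct)
  case less
  show ?case
  proof (cases S)
    case Nil
    then show ?thesis by (intro exI[of _ "[]"]) simp
  next
    case (Cons c S')
    obtain L where L: "1 \<le> L" "L \<le> length S" "lzc P S (take L S)"
    proof (cases "c \<in> set P")
      case False
      have "lzc P S (take 1 S)" unfolding lzc_def using False Cons by simp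
      then show ?thesis using that[of 1] Cons by simp
    next
      case True
      define A where "A = {l. l \<le> length S \<and> sublist (take l S) P}"
      have finA: "finite A" unfolding A_def by simp
      have oneA: "1 \<in> A" unfolding A_def using Cons True sublist_single by simp
      define L where "L = Max A"
      have LA: "L \<in> A" unfolding L_def using finA oneA Max_in by blast
      have L1: "1 \<le> L" unfolding L_def using finA oneA Max_ge by blast
      have "lzc P S (take L S)"
        unfolding lzc_def
      proof (intro disjI2 conjI allI impI)
        show "take L S \<noteq> []" using L1 Cons by simp
        show "prefix (take L S) S" by (rule take_is_prefix)
        show "sublist (take L S) P" using LA unfolding A_def by simp
      next
        fix g assume g: "prefix g S \<and> sublist g P"
        then have "g = take (length g) S" by (metis prefix_def append_eq_conv_conj)
        moreover have "length g \<le> length S" using g prefix_length_le by blast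
        ultimately have "length g \<in> A" unfolding A_def using g by auto
        then have "length g \<le> L" unfolding L_def using finA Max_ge by blast
        then show "length g \<le> length (take L S)" using LA unfolding A_def by simp
      qed
      then show ?thesis using that L1 LA unfolding A_def by simp
    qed
    have "length (drop L S) < length S" using L(1) Cons by simp
    from less(1)[OF this] obtain fs' where fs':
      "concat fs' = drop L S"
      "\<forall>i<length fs'. lzc ((P @ take L S) @ concat (take i fs')) (concat (drop i fs')) (fs'!i)"
      by blast
    show ?thesis
    proof (intro exI[of _ "take L S # fs'"] conjI allI impI)
      show "concat (take L S # fs') = S" using fs'(1) by simp
    next
      fix i assume i: "i < length (take L S # fs')"
      show "lzc (P @ concat (take i (take L S # fs'))) (concat (drop i (take L S # fs'))) ((take L S # fs') ! i)"
      proof (cases i)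
        case 0 then show ?thesis using L(3) fs'(1) by simp
      next
        case (Suc j)
        then have "j < length fs'" using i by simp
        then show ?thesis using fs'(2) Suc by simp
      qed
    qed
  qed
qed

lemma lz_exists: "\<exists>fs. is_lzss_fact T fs"
  using lz_ex[of T "[]"] unfolding is_lzss_alt by simp

lemma lz_vp: "is_lzss_fact T fs \<Longrightarrow> vp fs"
  unfolding is_lzss_alt vp_def lzc_def by fastforce

lemma lz_ne: "is_lzss_fact T fs \<Longrightarrow> \<forall>f\<in>set fs. f \<noteq> []"
  unfolding is_lzss_alt lzc_def by (metis in_set_conv_nth length_0_conv zero_neq_one)

lemma lz_opt:
  assumes lz: "is_lzss_fact T fs" and vp: "vp ps" and cp: "concat ps = T"
  shows "length fs \<le> length ps"
proof -
  have cf: "concat fs = T" using lz unfolding is_lzss_alt by simp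
  have ne: "\<forall>f\<in>set fs. f \<noteq> []" using lz_ne[OF lz] .
  have key: "k \<le> length ps \<longrightarrow> k \<le> length fs \<longrightarrow> length (concat (take k ps)) \<le> length (concat (take k fs))" for k
  proof (induction k)
    case 0 then show ?case by simp
  next
    case (Suc k)
    show ?case
    proof (intro impI)
      assume kp: "Suc k \<le> length ps" and kf: "Suc k \<le> length fs"
      define A where "A = concat (take k ps)"
      define F where "F = concat (take k fs)"
      define q where "q = ps ! k"
      define f where "f = fs ! k"
      define a where "a = length A"
      define p where "p = length F"
      have ap: "a \<le> p" using Suc.IH kp kf unfolding a_def p_def A_def F_def by simp
      have TA: "T = A @ q @ concat (drop (Suc k) ps)"
        using cp kp unfolding A_def q_def
        by (metis Cons_nth_drop_Suc Suc_le_lessD append_take_drop_id concat.simps(2) concat_append)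
      have TF: "T = F @ f @ concat (drop (Suc k) fs)"
        using cf kf unfolding F_def f_def
        by (metis Cons_nth_drop_Suc Suc_le_lessD append_take_drop_id concat.simps(2) concat_append)
      have SF: "concat (drop k fs) = f @ concat (drop (Suc k) fs)"
        using kf unfolding f_def by (metis Cons_nth_drop_Suc Suc_le_lessD concat.simps(2))
      have fne: "f \<noteq> []" using ne kf unfolding f_def by simp
      have cA: "concat (take (Suc k) ps) = A @ q" using kp unfolding A_def q_def
        by (simp add: take_Suc_conv_app_nth)
      have cF: "concat (take (Suc k) fs) = F @ f" using kf unfolding F_def f_def
        by (simp add: take_Suc_conv_app_nth)
      have lz0: "lzc F (concat (drop k fs)) f"
        unfolding F_def f_def using lz kf unfolding is_lzss_alt by auto
      have lzk: "lzc F (f @ concat (drop (Suc k) fs)) f"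
        using lz0 unfolding SF .
      have vpk: "length q \<le> 1 \<or> sublist q A"
        using vp kp unfolding vp_def A_def q_def by simp
      have "a + length q \<le> p + length f"
      proof (cases "a + length q \<le> p")
        case True then show ?thesis by simp
      next
        case False
        then have pq: "p < a + length q" by simp
        show ?thesis
        proof (cases "length q \<le> 1")
          case True
          have "1 \<le> length f" using fne by (cases f) auto
          then show ?thesis using True ap by simp
        next
          case False
          then have sqA: "sublist q A" using vpk by simp
          define g where "g = drop (p - a) q"
          define R where "R = concat (drop (Suc k) ps)"
          have d1: "drop p T = g @ R"
            unfolding g_def R_def using TA ap pq unfolding a_def by simp
          have d2: "drop p T = f @ concat (drop (Suc k) fs)" using TF unfolding p_def by simp
          have gne: "g \<noteq> []" unfolding g_def using pq ap by simp
          have lg: "length g = a + length q - p" unfolding g_def using ap pq by simp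
          have "prefix A F"
          proof -
            have "prefix A T" using TA by (metis prefixI)
            moreover have "prefix F T" using TF by (metis prefixI)
            ultimately show ?thesis using prefix_length_prefix ap unfolding a_def p_def by blast
          qed
          then have gF: "sublist g F"
            using sqA unfolding g_def by (meson prefix_imp_sublist sub_trans sublist_drop)
          have hd_eq: "hd g = hd f" using d1 d2 gne fne by (metis hd_append2)
          show ?thesis
          proof (cases "length f = 1 \<and> hd f \<notin> set F")
            case True
            have "hd g \<in> set F" using gne gF set_mono_sublist hd_in_set by blast
            then show ?thesis using True hd_eq by simp
          next
            case False
            then have "\<forall>g. prefix g (f @ concat (drop (Suc k) fs)) \<and> sublist g F \<longrightarrow> length g \<le> length f"
              using lzk unfolding lzc_def by blast
            moreover have "prefix g (f @ concat (drop (Suc k) fs))" using d1 d2 by (metis prefixI)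
            ultimately have "length g \<le> length f" using gF by blast
            then show ?thesis using lg pq by simp
          qed
        qed
      qed
      then show "length (concat (take (Suc k) ps)) \<le> length (concat (take (Suc k) fs))"
        using cA cF unfolding a_def p_def by simp
    qed
  qed
  show ?thesis
  proof (rule ccontr)
    assume "\<not> length fs \<le> length ps"
    then have lt: "length ps < length fs" by simp
    define k where "k = length ps"
    have "length (concat (take k ps)) \<le> length (concat (take k fs))" using key[of k] lt unfolding k_def by simp
    then have "length T \<le> length (concat (take k fs))" using cp unfolding k_def by simp
    moreover have "T = concat (take k fs) @ fs ! k @ concat (drop (Suc k) fs)"
      using cf lt unfolding k_def
      by (metis Cons_nth_drop_Suc append_take_drop_id concat.simps(2) concat_append)
    moreover have "fs ! k \<noteq> []" using ne lt unfolding k_def by simp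
    ultimately show False by (metis append.right_neutral append_eq_append_conv le_add1 length_append le_antisym Nil_is_append_conv not_less_eq_eq)
  qed
qed

lemma z_SS_eq: assumes "is_lzss_fact T fs" shows "z_SS T = length fs"
  unfolding z_SS_def
proof (rule the_equality)
  show "\<exists>fs'. is_lzss_fact T fs' \<and> length fs' = length fs" using assms by blast
next
  fix k assume "\<exists>fs'. is_lzss_fact T fs' \<and> length fs' = k"
  then obtain fs' where fs': "is_lzss_fact T fs'" "length fs' = k" by blast
  have c1: "concat fs = T" "concat fs' = T" using assms fs'(1) unfolding is_lzss_alt by simp_all
  have "length fs' \<le> length fs" using lz_opt[OF fs'(1) lz_vp[OF assms] c1(1)] .
  moreover have "length fs \<le> length fs'" using lz_opt[OF assms lz_vp[OF fs'(1)] c1(2)] .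
  ultimately show "k = length fs" using fs'(2) by simp
qed

lemma z_SS_fact: "\<exists>fs. is_lzss_fact T fs \<and> z_SS T = length fs"
  using lz_exists z_SS_eq by blast

lemma z_SS_le: assumes "vp ps" "concat ps = T" shows "z_SS T \<le> length ps"
proof -
  obtain fs where "is_lzss_fact T fs" "z_SS T = length fs" using z_SS_fact by blast
  then show ?thesis using lz_opt assms by metis
qed

lemma ed0: "ed xs ys = 0 \<Longrightarrow> xs = ys"
proof (induction xs ys rule: ed.induct)
  case (3 x xs y ys)
  then show ?case by (auto simp: min_def split: if_splits)
qed auto

lemma ed_cons_cases:
  assumes "ed (x # xs) (y # ys) = 1"
  shows "ed xs (y # ys) = 0 \<or> ed (x # xs) ys = 0 \<or> (x = y \<and> ed xs ys = 1) \<or> (x \<noteq> y \<and> ed xs ys = 0)"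
  using assms by (auto simp: min_def split: if_splits)

lemma ed_sub: "length xs = length ys \<Longrightarrow> ed xs ys = 1 \<Longrightarrow> \<exists>u a b v. xs = u @ a # v \<and> ys = u @ b # v"
proof (induction xs ys rule: ed.induct)
  case (3 x xs y ys)
  from ed_cons_cases[OF "3.prems"(2)] show ?case
  proof (elim disjE conjE)
    assume "ed xs (y # ys) = 0" then have "xs = y # ys" by (rule ed0)
    then show ?case using "3.prems"(1) by simp
  next
    assume "ed (x # xs) ys = 0" then have "x # xs = ys" by (rule ed0)
    then show ?case using "3.prems"(1) by simp
  next
    assume "x = y" "ed xs ys = 1"
    then obtain u a b v where "xs = u @ a # v" "ys = u @ b # v" using "3.IH"(3) "3.prems"(1) by auto
    then show ?case using \<open>x = y\<close> by (intro exI[of _ "x # u"]) auto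
  next
    assume "x \<noteq> y" "ed xs ys = 0"
    then have "xs = ys" by (simp add: ed0)
    then show ?case by (intro exI[of _ "[]"]) auto
  qed
qed auto

lemma ed_ins: "length ys = length xs + 1 \<Longrightarrow> ed xs ys = 1 \<Longrightarrow> \<exists>u b v. xs = u @ v \<and> ys = u @ b # v"
proof (induction xs ys rule: ed.induct)
  case (1 ys)
  then obtain b where "ys = [b]" by (cases ys) auto
  then show ?case by auto
next
  case (3 x xs y ys)
  from ed_cons_cases[OF "3.prems"(2)] show ?case
  proof (elim disjE conjE)
    assume "ed xs (y # ys) = 0" then have "xs = y # ys" by (rule ed0)
    then show ?case using "3.prems"(1) by simp
  next
    assume "ed (x # xs) ys = 0" then have "x # xs = ys" by (rule ed0)
    then show ?case by (intro exI[of _ "[]"]) auto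
  next
    assume "x = y" "ed xs ys = 1"
    then obtain u b v where "xs = u @ v" "ys = u @ b # v" using "3.IH"(3) "3.prems"(1) by auto
    then show ?case using \<open>x = y\<close> by (intro exI[of _ "x # u"]) auto
  next
    assume "x \<noteq> y" "ed xs ys = 0"
    then have "xs = ys" by (simp add: ed0)
    then show ?case using "3.prems"(1) by simp
  qed
qed auto

lemma ed_del: "length xs = length ys + 1 \<Longrightarrow> ed xs ys = 1 \<Longrightarrow> \<exists>u a v. xs = u @ a # v \<and> ys = u @ v"
proof (induction xs ys rule: ed.induct)
  case (2 x xs)
  then show ?case by auto
next
  case (3 x xs y ys)
  from ed_cons_cases[OF "3.prems"(2)] show ?case
  proof (elim disjE conjE)
    assume "ed xs (y # ys) = 0" then have "xs = y # ys" by (rule ed0)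
    then show ?case by (intro exI[of _ "[]"]) auto
  next
    assume "ed (x # xs) ys = 0" then have "x # xs = ys" by (rule ed0)
    then show ?case using "3.prems"(1) by simp
  next
    assume "x = y" "ed xs ys = 1"
    then obtain u a v where "xs = u @ a # v" "ys = u @ v" using "3.IH"(3) "3.prems"(1) by auto
    then show ?case using \<open>x = y\<close> by (intro exI[of _ "x # u"]) auto
  next
    assume "x \<noteq> y" "ed xs ys = 0"
    then have "xs = ys" by (simp add: ed0)
    then show ?case using "3.prems"(1) by simp
  qed
qed auto

lemma z_pos: "T \<noteq> [] \<Longrightarrow> z_SS T \<ge> 1"
proof -
  assume "T \<noteq> []"
  obtain fs where "is_lzss_fact T fs" "z_SS T = length fs" using z_SS_fact by blast
  then show ?thesis using \<open>T \<noteq> []\<close> unfolding is_lzss_alt by (cases fs) auto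
qed

lemma edit_bound:
  assumes "T = u @ mid @ v" "length mid \<le> 1" "mid \<noteq> [] \<or> v \<noteq> []" "length mid' \<le> 1"
  shows "z_SS (u @ mid' @ v) \<le> length mid' + (2 + length mid) * (z_SS T - 1) + (1 - length mid)"
proof -
  obtain fs where fs: "is_lzss_fact T fs" "z_SS T = length fs" using z_SS_fact by blast
  have c: "concat fs = u @ mid @ v" using fs(1) assms(1) unfolding is_lzss_alt by simp
  obtain ps where ps: "vp ps" "concat ps = u @ mid' @ v"
     "length ps \<le> length mid' + (2 + length mid) * (length fs - 1) + (1 - length mid)"
    using main_edit[OF lz_vp[OF fs(1)] lz_ne[OF fs(1)] c assms(2,3,4)] by blast
  show ?thesis using z_SS_le[OF ps(1,2)] ps(3) fs(2) by simp
qed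

lemma sub_bound: "length T' = length T \<Longrightarrow> ed T T' = 1 \<Longrightarrow> z_SS T' + 2 \<le> 3 * z_SS T"
proof -
  assume "length T' = length T" "ed T T' = 1"
  then obtain u a b v where e: "T = u @ a # v" "T' = u @ b # v" using ed_sub by metis
  have "z_SS (u @ [b] @ v) \<le> length [b] + (2 + length [a]) * (z_SS T - 1) + (1 - length [a])"
    by (rule edit_bound) (use e in auto)
  moreover have "z_SS T \<ge> 1" using z_pos[of T] e by simp
  ultimately show ?thesis using e by simp
qed

lemma ins_bound: "T \<noteq> [] \<Longrightarrow> length T' = length T + 1 \<Longrightarrow> ed T T' = 1 \<Longrightarrow> z_SS T' \<le> 2 * z_SS T"
proof -
  assume ne: "T \<noteq> []" and "length T' = length T + 1" "ed T T' = 1"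
  then obtain u b v where e: "T = u @ v" "T' = u @ b # v" using ed_ins by metis
  have z1: "z_SS T \<ge> 1" using z_pos ne by simp
  show ?thesis
  proof (cases "v = []")
    case False
    have "z_SS (u @ [b] @ v) \<le> length [b] + (2 + length ([]::'a list)) * (z_SS T - 1) + (1 - length ([]::'a list))"
      by (rule edit_bound) (use e False in auto)
    then show ?thesis using e z1 by simp
  next
    case True
    obtain fs where fs: "is_lzss_fact T fs" "z_SS T = length fs" using z_SS_fact by blast
    have "vp (fs @ [[b]])" using vp_block[OF lz_vp[OF fs(1)]] by simp
    moreover have "concat (fs @ [[b]]) = T'" using fs(1) e True unfolding is_lzss_alt by simp
    ultimately have "z_SS T' \<le> length (fs @ [[b]])" using z_SS_le by blast
    then show ?thesis using fs(2) z1 by simp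
  qed
qed

lemma del_bound: "length T' + 1 = length T \<Longrightarrow> ed T T' = 1 \<Longrightarrow> z_SS T' + 3 \<le> 3 * z_SS T"
proof -
  assume "length T' + 1 = length T" "ed T T' = 1"
  then obtain u a v where e: "T = u @ a # v" "T' = u @ v" using ed_del by (metis)
  have "z_SS (u @ [] @ v) \<le> length ([]::'a list) + (2 + length [a]) * (z_SS T - 1) + (1 - length [a])"
    by (rule edit_bound) (use e in auto)
  moreover have "z_SS T \<ge> 1" using z_pos[of T] e by simp
  ultimately show ?thesis using e by simp
qed

lemma z_nil: "z_SS [] = 0"
proof -
  have "is_lzss_fact [] []" unfolding is_lzss_alt by simp
  then show ?thesis using z_SS_eq by fastforce
qed

lemma ratio_le: "(a::nat) \<le> c * b \<Longrightarrow> ereal (real a / real b) \<le> ereal (real c)"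
proof -
  assume h: "a \<le> c * b"
  have "real a / real b \<le> real c"
  proof (cases "b = 0")
    case True then show ?thesis by simp
  next
    case False
    then have "real a \<le> real c * real b" using h by (metis of_nat_le_iff of_nat_mult)
    then show ?thesis using False by (simp add: divide_le_eq)
  qed
  then show ?thesis by simp
qed

lemma MS_sub_le: "MS_sub (z_SS :: 'a list \<Rightarrow> nat) n \<le> 3"
  unfolding MS_sub_def
proof (rule Sup_least)
  fix x assume "x \<in> {ereal (real (z_SS T') / real (z_SS T)) | T T'. length T = n \<and> length T' = n \<and> ed (T :: 'a list) T' = 1}"
  then obtain T T' :: "'a list" where xe: "x = ereal (real (z_SS T') / real (z_SS T))"
    and h: "length T' = length T" "ed T T' = 1"
    by auto
  have "z_SS T' + 2 \<le> 3 * z_SS T" using sub_bound h by metis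
  then have "ereal (real (z_SS T') / real (z_SS T)) \<le> ereal (real 3)" by (intro ratio_le) simp
  then show "x \<le> 3" unfolding xe by simp
qed

lemma MS_del_le: "MS_del (z_SS :: 'a list \<Rightarrow> nat) n \<le> 3"
  unfolding MS_del_def
proof (rule Sup_least)
  fix x assume "x \<in> {ereal (real (z_SS T') / real (z_SS T)) | T T'. length T = n \<and> length T' + 1 = n \<and> ed (T :: 'a list) T' = 1}"
  then obtain T T' :: "'a list" where xe: "x = ereal (real (z_SS T') / real (z_SS T))"
    and h: "length T' + 1 = length T" "ed T T' = 1"
    by auto
  have "z_SS T' + 3 \<le> 3 * z_SS T" using del_bound h by metis
  then have "ereal (real (z_SS T') / real (z_SS T)) \<le> ereal (real 3)" by (intro ratio_le) simp
  then show "x \<le> 3" unfolding xe by simp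
qed

lemma MS_ins_le: "MS_ins (z_SS :: 'a list \<Rightarrow> nat) n \<le> 2"
  unfolding MS_ins_def
proof (rule Sup_least)
  fix x assume "x \<in> {ereal (real (z_SS T') / real (z_SS T)) | T T'. length T = n \<and> length T' = n + 1 \<and> ed (T :: 'a list) T' = 1}"
  then obtain T T' :: "'a list" where xe: "x = ereal (real (z_SS T') / real (z_SS T))"
    and h: "length T' = length T + 1" "ed T T' = 1"
    by auto
  show "x \<le> 2" unfolding xe
  proof (cases "T = []")
    case True
    then show "ereal (real (z_SS T') / real (z_SS T)) \<le> 2" by (simp add: z_nil)
  next
    case False
    then have "z_SS T' \<le> 2 * z_SS T" using ins_bound h by metis
    then have "ereal (real (z_SS T') / real (z_SS T)) \<le> ereal (real 2)" by (intro ratio_le) simp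
    then show "ereal (real (z_SS T') / real (z_SS T)) \<le> 2" by simp
  qed
qed

theorem mainTheorem13:
  shows "limsup (\<lambda>n. MS_sub (z_SS :: 'a list \<Rightarrow> nat) n) \<le> 3
    \<and> (\<forall>(T :: 'a list) T'. length T' = length T \<and> ed T T' = 1 \<longrightarrow>
          int (z_SS T') - int (z_SS T) \<le> 2 * int (z_SS T) - 2)
    \<and> (\<forall>n. MS_ins (z_SS :: 'a list \<Rightarrow> nat) n \<le> 2)
    \<and> (\<forall>(T :: 'a list) T'. T \<noteq> [] \<and> length T' = length T + 1 \<and> ed T T' = 1 \<longrightarrow>
          int (z_SS T') - int (z_SS T) \<le> int (z_SS T))
    \<and> limsup (\<lambda>n. MS_del (z_SS :: 'a list \<Rightarrow> nat) n) \<le> 3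
    \<and> (\<forall>(T :: 'a list) T'. length T' + 1 = length T \<and> ed T T' = 1 \<longrightarrow>
          int (z_SS T') - int (z_SS T) \<le> 2 * int (z_SS T) - 3)"
proof (intro conjI allI impI)
  show "limsup (\<lambda>n. MS_sub (z_SS :: 'a list \<Rightarrow> nat) n) \<le> 3"
    by (intro Limsup_bounded always_eventually allI MS_sub_le)
  show "limsup (\<lambda>n. MS_del (z_SS :: 'a list \<Rightarrow> nat) n) \<le> 3"
    by (intro Limsup_bounded always_eventually allI MS_del_le)
  show "MS_ins (z_SS :: 'a list \<Rightarrow> nat) n \<le> 2" for n by (rule MS_ins_le)
next
  fix T T' :: "'a list" assume "length T' = length T \<and> ed T T' = 1"
  then have "z_SS T' + 2 \<le> 3 * z_SS T" using sub_bound by blast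
  then show "int (z_SS T') - int (z_SS T) \<le> 2 * int (z_SS T) - 2" by linarith
next
  fix T T' :: "'a list" assume "T \<noteq> [] \<and> length T' = length T + 1 \<and> ed T T' = 1"
  then have "z_SS T' \<le> 2 * z_SS T" using ins_bound by blast
  then show "int (z_SS T') - int (z_SS T) \<le> int (z_SS T)" by linarith
next
  fix T T' :: "'a list" assume "length T' + 1 = length T \<and> ed T T' = 1"
  then have "z_SS T' + 3 \<le> 3 * z_SS T" using del_bound by blast
  then show "int (z_SS T') - int (z_SS T) \<le> 2 * int (z_SS T) - 3" by linarith
qed

end
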